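(* Consider a restless bandit, set system $(N^{\{0,1\}},\mathcal F)$ as in the context, and suppose the bandit is PCL-indexable relative to $b^u$ and $\mathcal F$-policies, with the adaptive-greedy algorithm on input $\widehat{\mathbf h}^0_{N^{\{0,1\}}}$ producing $\boldsymbol\pi=(\pi_1,\dots,\pi_n)$ and $\boldsymbol\nu$; let $S_k=\{\pi_k,\dots,\pi_n\}$ ($1\le k\le n$), $S_{n+1}=\emptyset$, and $v^S_i(\nu)=v^S_i+\nu b^S_i$. Then for each $i\in N$, $v_i(\nu)$ is continuous, concave and piecewise linear in $\nu$, and $$v_i(\nu)=\min\{v^{S_k}_i(\nu):1\le k\le n+1\}=\begin{cases} v^{S_1}_i(\nu), & \nu\in(-\infty,\nu_{\pi_1}],\\ v^{S_k}_i(\nu), & \nu\in[\nu_{\pi_{k-1}},\nu_{\pi_k}],\ 2\le k\le n,\\ v^{S_{n+1}}_i(\nu), & \nu\in[\nu_{\pi_n},+\infty).\end{cases}$$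
   Context: Restless bandit: finite state space $N=N^{\{0,1\}}\cup N^{\{1\}}$ (disjoint; controllable and uncontrollable states); actions $a\in\{0,1\}$; one-period costs $h^a_i$, transition probabilities $p^a_{ij}$ with $p^1_{ij}=p^0_{ij}$ for $i\in N^{\{1\}}$; discount factor $\beta\in(0,1)$; activity weights $\theta^1_j>0$. Stationary policies $u:N\to[0,1]$ (probability of active action) with $u(i)=1$ on $N^{\{1\}}$. $v^u_i=E^u_i[\sum_{t\ge0}h^{a(t)}_{X(t)}\beta^t]$, $b^u_i=E^u_i[\sum_{t\ge0}\theta^1_{X(t)}a(t)\beta^t]$. For $S\subseteq N^{\{0,1\}}$ the $S$-active policy is active on $S\cup N^{\{1\}}$, passive elsewhere; $v^S_i,b^S_i$ its measures. $v_i(\nu)=\min_u\{v^u_i+\nu b^u_i\}$. Marginal workloads $w^S_i=\theta^1_i1\{i\in N^{\{0,1\}}\}+\beta\sum_j(p^1_{ij}-p^0_{ij})b^S_j$. $\widehat{\mathbf h}^0=\mathbf h^0-(\mathbf I-\beta\mathbf P^0)(\mathbf I-\beta\mathbf P^1)^{-1}\mathbf h^1$. $\mathcal F\subseteq2^{N^{\{0,1\}}}$: $\emptyset\in\mathcal F$; each nonempty $S\in\mathcal F$ has nonempty $\partial^-S=\{j\in S:S\setminus\{j\}\in\mathcal F\}$; each $S\in\mathcal F$ other than $N^{\{0,1\}}$ has $j\notin S$ with $S\cup\{j\}\in\mathcal F$. Adaptive-greedy algorithm on input $\mathbf c$, $n=|N^{\{0,1\}}|$: $S_1=N^{\{0,1\}}$,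 $y^{S_1}=\min\{c_j/w^{S_1}_j:j\in\partial^-S_1\}$, $\pi_1$ a minimizer, $\nu_{\pi_1}=y^{S_1}$; for $k=2..n$: $S_k=S_{k-1}\setminus\{\pi_{k-1}\}$, $y^{S_k}=\min\{(c_j-\sum_{l<k}y^{S_l}w^{S_l}_j)/w^{S_k}_j:j\in\partial^-S_k\}$, $\pi_k$ a minimizer, $\nu_{\pi_k}=\nu_{\pi_{k-1}}+y^{S_k}$. PCL-indexability: (i) $w^S_j>0$ for $S\in\mathcal F$, $j\in N^{\{0,1\}}$; (ii) on input $(\widehat h^0_j)_{j\in N^{\{0,1\}}}$ the output satisfies $\nu_{\pi_1}\le\cdots\le\nu_{\pi_n}$. *)

theory Defs
  imports "HOL-Analysis.Analysis"
begin

text \<open>Restless bandit on a finite state set N. Transition matrices and cost vectors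
are functions; a stationary randomized policy u gives the probability of the active
action in each state.\<close>

definition pmat :: "('a \<Rightarrow> 'a \<Rightarrow> real) \<Rightarrow> ('a \<Rightarrow> 'a \<Rightarrow> real) \<Rightarrow> ('a \<Rightarrow> real) \<Rightarrow> 'a \<Rightarrow> 'a \<Rightarrow> real" where
  "pmat p0 p1 u i j = u i * p1 i j + (1 - u i) * p0 i j"

definition hcost :: "('a \<Rightarrow> real) \<Rightarrow> ('a \<Rightarrow> real) \<Rightarrow> ('a \<Rightarrow> real) \<Rightarrow> 'a \<Rightarrow> real" where
  "hcost h0 h1 u i = u i * h1 i + (1 - u i) * h0 i"

definition stepop :: "'a set \<Rightarrow> ('a \<Rightarrow> 'a \<Rightarrow> real) \<Rightarrow> ('a \<Rightarrow> real) \<Rightarrow> 'a \<Rightarrow> real" where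
  "stepop N P f i = (\<Sum>j\<in>N. P i j * f j)"

text \<open>Expected total discounted reward E_i[sum_t beta^t c(X t)] of a Markov chain with
transition matrix P: sum_t beta^t (P^t c)_i.\<close>
definition dval :: "'a set \<Rightarrow> real \<Rightarrow> ('a \<Rightarrow> 'a \<Rightarrow> real) \<Rightarrow> ('a \<Rightarrow> real) \<Rightarrow> 'a \<Rightarrow> real" where
  "dval N \<beta> P c i = (\<Sum>t. \<beta> ^ t * ((stepop N P ^^ t) c) i)"

text \<open>v^u_i : expected discounted cost; b^u_i : expected discounted work.\<close>
definition vpol :: "'a set \<Rightarrow> real \<Rightarrow> ('a \<Rightarrow> 'a \<Rightarrow> real) \<Rightarrow> ('a \<Rightarrow> 'a \<Rightarrow> real)
    \<Rightarrow> ('a \<Rightarrow> real) \<Rightarrow> ('a \<Rightarrow> real) \<Rightarrow> ('a \<Rightarrow> real) \<Rightarrow> 'a \<Rightarrow> real" where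
  "vpol N \<beta> p0 p1 h0 h1 u = dval N \<beta> (pmat p0 p1 u) (hcost h0 h1 u)"

definition bpol :: "'a set \<Rightarrow> real \<Rightarrow> ('a \<Rightarrow> 'a \<Rightarrow> real) \<Rightarrow> ('a \<Rightarrow> 'a \<Rightarrow> real)
    \<Rightarrow> ('a \<Rightarrow> real) \<Rightarrow> ('a \<Rightarrow> real) \<Rightarrow> 'a \<Rightarrow> real" where
  "bpol N \<beta> p0 p1 \<theta> u = dval N \<beta> (pmat p0 p1 u) (\<lambda>i. \<theta> i * u i)"

text \<open>Admissible stationary policies: u : N -> [0,1], u = 1 on the uncontrollable states.\<close>
definition policies :: "'a set \<Rightarrow> 'a set \<Rightarrow> ('a \<Rightarrow> real) set" where
  "policies N N1 = {u. \<forall>i\<in>N. 0 \<le> u i \<and> u i \<le> 1 \<and> (i \<in> N1 \<longrightarrow> u i = 1)}"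

definition sact :: "'a set \<Rightarrow> 'a set \<Rightarrow> 'a \<Rightarrow> real" where
  "sact N1 S i = (if i \<in> S \<union> N1 then 1 else 0)"

definition vopt :: "'a set \<Rightarrow> 'a set \<Rightarrow> real \<Rightarrow> ('a \<Rightarrow> 'a \<Rightarrow> real) \<Rightarrow> ('a \<Rightarrow> 'a \<Rightarrow> real)
    \<Rightarrow> ('a \<Rightarrow> real) \<Rightarrow> ('a \<Rightarrow> real) \<Rightarrow> ('a \<Rightarrow> real) \<Rightarrow> 'a \<Rightarrow> real \<Rightarrow> real" where
  "vopt N N1 \<beta> p0 p1 h0 h1 \<theta> i \<nu> =
     (INF u\<in>policies N N1. vpol N \<beta> p0 p1 h0 h1 u i + \<nu> * bpol N \<beta> p0 p1 \<theta> u i)"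

definition workload :: "'a set \<Rightarrow> 'a set \<Rightarrow> 'a set \<Rightarrow> real \<Rightarrow> ('a \<Rightarrow> 'a \<Rightarrow> real) \<Rightarrow> ('a \<Rightarrow> 'a \<Rightarrow> real)
    \<Rightarrow> ('a \<Rightarrow> real) \<Rightarrow> 'a set \<Rightarrow> 'a \<Rightarrow> real" where
  "workload N N01 N1 \<beta> p0 p1 \<theta> S i =
     (if i \<in> N01 then \<theta> i else 0)
     + \<beta> * (\<Sum>j\<in>N. (p1 i j - p0 i j) * bpol N \<beta> p0 p1 \<theta> (sact N1 S) j)"

text \<open>hat h^0 = h^0 - (I - beta P^0)(I - beta P^1)^{-1} h^1, with (I - beta P^1)^{-1} h^1
written as its Neumann series.\<close>
definition hhat0 :: "'a set \<Rightarrow> real \<Rightarrow> ('a \<Rightarrow> 'a \<Rightarrow> real) \<Rightarrow> ('a \<Rightarrow> 'a \<Rightarrow> real)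
    \<Rightarrow> ('a \<Rightarrow> real) \<Rightarrow> ('a \<Rightarrow> real) \<Rightarrow> 'a \<Rightarrow> real" where
  "hhat0 N \<beta> p0 p1 h0 h1 i =
     (let x = dval N \<beta> p1 h1 in h0 i - (x i - \<beta> * (\<Sum>j\<in>N. p0 i j * x j)))"

definition bdry :: "'a set set \<Rightarrow> 'a set \<Rightarrow> 'a set" where
  "bdry F S = {j\<in>S. S - {j} \<in> F}"

definition set_system :: "'a set \<Rightarrow> 'a set set \<Rightarrow> bool" where
  "set_system N01 F \<longleftrightarrow> F \<subseteq> Pow N01 \<and> {} \<in> F
     \<and> (\<forall>S\<in>F. S \<noteq> {} \<longrightarrow> bdry F S \<noteq> {})
     \<and> (\<forall>S\<in>F. S \<noteq> N01 \<longrightarrow> (\<exists>j\<in>N01 - S. insert j S \<in> F))"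

text \<open>Adaptive-greedy algorithm: pi k (k = 1..n) are the chosen states, y k = y^{S_k};
the sets are S_k = N01 - {pi 1, ..., pi (k-1)}.\<close>
definition ag_set :: "'a set \<Rightarrow> (nat \<Rightarrow> 'a) \<Rightarrow> nat \<Rightarrow> 'a set" where
  "ag_set N01 \<pi> k = N01 - \<pi> ` {1..<k}"

definition ag_ratio :: "'a set \<Rightarrow> ('a set \<Rightarrow> 'a \<Rightarrow> real) \<Rightarrow> ('a \<Rightarrow> real)
    \<Rightarrow> (nat \<Rightarrow> 'a) \<Rightarrow> (nat \<Rightarrow> real) \<Rightarrow> nat \<Rightarrow> 'a \<Rightarrow> real" where
  "ag_ratio N01 w c \<pi> y k j =
     (c j - (\<Sum>l\<in>{1..<k}. y l * w (ag_set N01 \<pi> l) j)) / w (ag_set N01 \<pi> k) j"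

definition adaptive_greedy :: "'a set \<Rightarrow> 'a set set \<Rightarrow> ('a set \<Rightarrow> 'a \<Rightarrow> real) \<Rightarrow> ('a \<Rightarrow> real)
    \<Rightarrow> (nat \<Rightarrow> 'a) \<Rightarrow> (nat \<Rightarrow> real) \<Rightarrow> bool" where
  "adaptive_greedy N01 F w c \<pi> y \<longleftrightarrow>
     (\<forall>k\<in>{1..card N01}.
        \<pi> k \<in> bdry F (ag_set N01 \<pi> k)
      \<and> y k = ag_ratio N01 w c \<pi> y k (\<pi> k)
      \<and> (\<forall>j\<in>bdry F (ag_set N01 \<pi> k). y k \<le> ag_ratio N01 w c \<pi> y k j))"

definition ag_nu :: "(nat \<Rightarrow> real) \<Rightarrow> nat \<Rightarrow> real" where
  "ag_nu y k = (\<Sum>l\<in>{1..k}. y l)"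

definition pcl_indexable where
  "pcl_indexable N N01 N1 F \<beta> p0 p1 h0 h1 \<theta> \<pi> y \<longleftrightarrow>
     (\<forall>S\<in>F. \<forall>j\<in>N01. workload N N01 N1 \<beta> p0 p1 \<theta> S j > 0)
   \<and> adaptive_greedy N01 F (workload N N01 N1 \<beta> p0 p1 \<theta>) (hhat0 N \<beta> p0 p1 h0 h1) \<pi> y
   \<and> (\<forall>k\<in>{1..<card N01}. ag_nu y k \<le> ag_nu y (Suc k))"

definition piecewise_linear :: "(real \<Rightarrow> real) \<Rightarrow> bool" where
  "piecewise_linear f \<longleftrightarrow> (\<exists>B. finite B \<and>
     (\<forall>a b. a < b \<and> {a<..<b} \<inter> B = {} \<longrightarrow> (\<exists>c d. \<forall>x\<in>{a<..<b}. f x = c + d * x)))"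

end

theory Submission
  imports Defs
begin

definition stoch :: "'a set \<Rightarrow> ('a \<Rightarrow> 'a \<Rightarrow> real) \<Rightarrow> bool" where
  "stoch N P \<longleftrightarrow> (\<forall>i\<in>N. \<forall>j\<in>N. 0 \<le> P i j) \<and> (\<forall>i\<in>N. (\<Sum>j\<in>N. P i j) = 1)"

lemma stepop_pow_bound:
  assumes "stoch N P" "\<forall>j\<in>N. \<bar>f j\<bar> \<le> M"
  shows "i \<in> N \<Longrightarrow> \<bar>(stepop N P ^^ t) f i\<bar> \<le> M"
proof (induction t arbitrary: i)
  case 0 thus ?case using assms by simp
next
  case (Suc t)
  have "\<bar>(stepop N P ^^ Suc t) f i\<bar> = \<bar>\<Sum>j\<in>N. P i j * (stepop N P ^^ t) f j\<bar>"
    by (simp add: stepop_def)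
  also have "\<dots> \<le> (\<Sum>j\<in>N. \<bar>P i j * (stepop N P ^^ t) f j\<bar>)" by (rule sum_abs)
  also have "\<dots> \<le> (\<Sum>j\<in>N. P i j * M)"
    apply (rule sum_mono) using Suc assms by (auto simp: stoch_def abs_mult intro: mult_left_mono)
  also have "\<dots> = M" using assms Suc.prems by (simp add: stoch_def sum_distrib_right[symmetric])
  finally show ?case .
qed

lemma stepop_pow_mono:
  assumes "stoch N P" "\<forall>j\<in>N. f j \<le> g j"
  shows "i \<in> N \<Longrightarrow> (stepop N P ^^ t) f i \<le> (stepop N P ^^ t) g i"
proof (induction t arbitrary: i)
  case 0 thus ?case using assms by simp
next
  case (Suc t)
  show ?case using Suc assms
    by (simp add: stepop_def stoch_def sum_mono mult_left_mono)
qed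

lemma stepop_pow_lin:
  "(stepop N P ^^ t) (\<lambda>i. a * f i + b * g i) = (\<lambda>i. a * (stepop N P ^^ t) f i + b * (stepop N P ^^ t) g i)"
proof (induction t)
  case 0 thus ?case by simp
next
  case (Suc t)
  show ?case using Suc
    by (simp add: stepop_def sum.distrib sum_distrib_left algebra_simps)
qed

lemma bound_exists: "finite N \<Longrightarrow> \<exists>M. \<forall>j\<in>N. \<bar>f j\<bar> \<le> (M::real)"
  by (intro exI[of _ "\<Sum>j\<in>N. \<bar>f j\<bar>"]) (auto intro: member_le_sum)

lemma dval_summable:
  assumes "finite N" "stoch N P" "0 \<le> \<beta>" "\<beta> < 1" "i \<in> N"
  shows "summable (\<lambda>t. \<beta> ^ t * (stepop N P ^^ t) c i)"
proof -
  obtain M where M: "\<forall>j\<in>N. \<bar>c j\<bar> \<le> M" using bound_exists[OF assms(1)] by blast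
  show ?thesis
  proof (rule summable_comparison_test)
    have "\<beta> ^ n * \<bar>(stepop N P ^^ n) c i\<bar> \<le> \<beta> ^ n * M" for n
      using stepop_pow_bound[OF assms(2) M assms(5)] assms(3) by (intro mult_left_mono) auto
    then show "\<exists>N0. \<forall>n\<ge>N0. norm (\<beta> ^ n * (stepop N P ^^ n) c i) \<le> M * \<beta> ^ n"
      using assms(3) by (auto simp: abs_mult mult.commute)
    show "summable (\<lambda>n. M * \<beta> ^ n)" using assms by (intro summable_mult summable_geometric) auto
  qed
qed

lemma dval_lin:
  assumes "finite N" "stoch N P" "0 \<le> \<beta>" "\<beta> < 1" "i \<in> N"
  shows "dval N \<beta> P (\<lambda>i. a * f i + b * g i) i = a * dval N \<beta> P f i + b * dval N \<beta> P g i"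
proof -
  note s = dval_summable[OF assms]
  have "dval N \<beta> P (\<lambda>i. a * f i + b * g i) i
      = (\<Sum>t. a * (\<beta> ^ t * (stepop N P ^^ t) f i) + b * (\<beta> ^ t * (stepop N P ^^ t) g i))"
    unfolding dval_def stepop_pow_lin by (simp add: algebra_simps)
  also have "\<dots> = (\<Sum>t. a * (\<beta> ^ t * (stepop N P ^^ t) f i)) + (\<Sum>t. b * (\<beta> ^ t * (stepop N P ^^ t) g i))"
    by (intro suminf_add[symmetric] summable_mult s)
  also have "\<dots> = a * dval N \<beta> P f i + b * dval N \<beta> P g i"
    unfolding dval_def by (simp add: suminf_mult s)
  finally show ?thesis .
qed

lemma dval_bellman:
  assumes "finite N" "stoch N P" "0 \<le> \<beta>" "\<beta> < 1" "i \<in> N"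
  shows "dval N \<beta> P c i = c i + \<beta> * (\<Sum>j\<in>N. P i j * dval N \<beta> P c j)"
proof -
  let ?X = "\<lambda>t. \<beta> ^ t * (stepop N P ^^ t) c i"
  have s: "summable ?X" by (rule dval_summable[OF assms])
  have "dval N \<beta> P c i = ?X 0 + (\<Sum>t. ?X (Suc t))"
    unfolding dval_def using suminf_split_head[OF s] by simp
  also have "(\<Sum>t. ?X (Suc t)) = (\<Sum>t. \<Sum>j\<in>N. \<beta> * P i j * (\<beta> ^ t * (stepop N P ^^ t) c j))"
    by (simp add: stepop_def sum_distrib_left algebra_simps)
  also have "\<dots> = (\<Sum>j\<in>N. \<Sum>t. \<beta> * P i j * (\<beta> ^ t * (stepop N P ^^ t) c j))"
    by (rule suminf_sum) (intro summable_mult dval_summable[OF assms(1-4)])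
  also have "\<dots> = (\<Sum>j\<in>N. \<beta> * P i j * dval N \<beta> P c j)"
    by (intro sum.cong refl, subst suminf_mult) (auto simp: dval_def intro: dval_summable[OF assms(1-4)])
  finally show ?thesis by (simp add: sum_distrib_left algebra_simps)
qed

lemma dval_ge:
  assumes "finite N" "stoch N P" "0 \<le> \<beta>" "\<beta> < 1"
    and g: "\<forall>i\<in>N. g i \<le> c i + \<beta> * stepop N P g i" and i: "i \<in> N"
  shows "g i \<le> dval N \<beta> P c i"
proof -
  have step: "\<forall>i\<in>N. g i \<le> (\<Sum>t<T. \<beta> ^ t * (stepop N P ^^ t) c i) + \<beta> ^ T * (stepop N P ^^ T) g i" for T
  proof (induction T)
    case 0 thus ?case by simp
  next
    case (Suc T)
    show ?case
    proof
      fix i assume i: "i \<in> N"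
      have "(stepop N P ^^ T) g i \<le> (stepop N P ^^ T) (\<lambda>j. 1 * c j + \<beta> * stepop N P g j) i"
        using stepop_pow_mono[OF assms(2) _ i] g by simp
      also have "\<dots> = (stepop N P ^^ T) c i + \<beta> * (stepop N P ^^ Suc T) g i"
        unfolding stepop_pow_lin funpow_Suc_right by simp
      finally have "\<beta> ^ T * (stepop N P ^^ T) g i \<le> \<beta> ^ T * ((stepop N P ^^ T) c i + \<beta> * (stepop N P ^^ Suc T) g i)"
        using assms(3) by (intro mult_left_mono) auto
      also have "\<beta> ^ T * ((stepop N P ^^ T) c i + \<beta> * (stepop N P ^^ Suc T) g i)
         = \<beta> ^ T * (stepop N P ^^ T) c i + \<beta> ^ Suc T * (stepop N P ^^ Suc T) g i"
        by (simp only: power_Suc algebra_simps)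
      finally have h1: "\<beta> ^ T * (stepop N P ^^ T) g i \<le> \<beta> ^ T * (stepop N P ^^ T) c i + \<beta> ^ Suc T * (stepop N P ^^ Suc T) g i" .
      have h2: "g i \<le> (\<Sum>t<T. \<beta> ^ t * (stepop N P ^^ t) c i) + \<beta> ^ T * (stepop N P ^^ T) g i"
        using Suc i by blast
      have h3: "(\<Sum>t<Suc T. \<beta> ^ t * (stepop N P ^^ t) c i) = (\<Sum>t<T. \<beta> ^ t * (stepop N P ^^ t) c i) + \<beta> ^ T * (stepop N P ^^ T) c i"
        by (rule sum.lessThan_Suc)
      show "g i \<le> (\<Sum>t<Suc T. \<beta> ^ t * (stepop N P ^^ t) c i) + \<beta> ^ Suc T * (stepop N P ^^ Suc T) g i"
        unfolding h3 using h1 h2 by linarith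
    qed
  qed
  obtain M where M: "\<forall>j\<in>N. \<bar>g j\<bar> \<le> M" using bound_exists[OF assms(1)] by blast
  have l1: "(\<lambda>T. \<Sum>t<T. \<beta> ^ t * (stepop N P ^^ t) c i) \<longlonglongrightarrow> dval N \<beta> P c i"
    unfolding dval_def by (rule summable_LIMSEQ) (rule dval_summable[OF assms(1-4) i])
  have l2: "(\<lambda>T. \<beta> ^ T * (stepop N P ^^ T) g i) \<longlonglongrightarrow> 0"
  proof (rule Lim_null_comparison)
    have "\<beta> ^ n * \<bar>(stepop N P ^^ n) g i\<bar> \<le> \<beta> ^ n * M" for n
      using stepop_pow_bound[OF assms(2) M i] assms(3) by (intro mult_left_mono) auto
    then show "\<forall>\<^sub>F T in sequentially. norm (\<beta> ^ T * (stepop N P ^^ T) g i) \<le> M * \<beta> ^ T"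
      using assms(3) by (auto simp: abs_mult mult.commute)
    show "(\<lambda>T. M * \<beta> ^ T) \<longlonglongrightarrow> 0"
      using assms by (intro tendsto_mult_right_zero LIMSEQ_power_zero) auto
  qed
  show ?thesis
    using LIMSEQ_le_const[OF tendsto_add[OF l1 l2]] step i by auto
qed

lemma dval_le:
  assumes "finite N" "stoch N P" "0 \<le> \<beta>" "\<beta> < 1"
    and g: "\<forall>i\<in>N. g i \<ge> c i + \<beta> * stepop N P g i" and i: "i \<in> N"
  shows "g i \<ge> dval N \<beta> P c i"
proof -
  have "\<forall>i\<in>N. (-g i) \<le> (-c i) + \<beta> * stepop N P (\<lambda>j. - g j) i"
    using g by (auto simp: stepop_def sum_negf)
  from dval_ge[OF assms(1-4) this i] have "- g i \<le> dval N \<beta> P (\<lambda>j. (-1) * c j + 0 * c j) i"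
    by simp
  also have "\<dots> = - dval N \<beta> P c i" using dval_lin[OF assms(1-4) i, of "-1" c 0 c] by simp
  finally show ?thesis by simp
qed

lemma dval_cong:
  assumes "\<forall>i\<in>N. \<forall>j\<in>N. P i j = P' i j" "\<forall>i\<in>N. c i = c' i" "i \<in> N"
  shows "dval N \<beta> P c i = dval N \<beta> P' c' i"
proof -
  have "\<forall>i\<in>N. (stepop N P ^^ t) c i = (stepop N P' ^^ t) c' i" for t
    by (induction t) (use assms in \<open>auto simp: stepop_def intro!: sum.cong\<close>)
  then show ?thesis using assms(3) by (simp add: dval_def)
qed

locale rb =
  fixes N N01 N1 :: "'a set" and F :: "'a set set" and \<beta> :: real
    and p0 p1 :: "'a \<Rightarrow> 'a \<Rightarrow> real" and h0 h1 \<theta> :: "'a \<Rightarrow> real"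
    and \<pi> :: "nat \<Rightarrow> 'a" and y :: "nat \<Rightarrow> real"
  assumes finN: "finite N"
    and partN: "N = N01 \<union> N1" "N01 \<inter> N1 = {}"
    and beta: "0 < \<beta>" "\<beta> < 1"
    and p0_nonneg: "\<forall>i\<in>N. \<forall>j\<in>N. 0 \<le> p0 i j"
    and p1_nonneg: "\<forall>i\<in>N. \<forall>j\<in>N. 0 \<le> p1 i j"
    and p0_stoch: "\<forall>i\<in>N. (\<Sum>j\<in>N. p0 i j) = 1"
    and p1_stoch: "\<forall>i\<in>N. (\<Sum>j\<in>N. p1 i j) = 1"
    and F: "set_system N01 F"
    and PCL: "pcl_indexable N N01 N1 F \<beta> p0 p1 h0 h1 \<theta> \<pi> y"
begin

definition "Vd u \<nu> i = dval N \<beta> (pmat p0 p1 u) (\<lambda>i. hcost h0 h1 u i + \<nu> * (\<theta> i * u i)) i"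
definition "VV S \<nu> i = vpol N \<beta> p0 p1 h0 h1 (sact N1 S) i + \<nu> * bpol N \<beta> p0 p1 \<theta> (sact N1 S) i"
definition "Aop \<nu> g i = h1 i + \<nu> * \<theta> i + \<beta> * (\<Sum>j\<in>N. p1 i j * g j)"
definition "Bop g i = h0 i + \<beta> * (\<Sum>j\<in>N. p0 i j * g j)"
definition "DD S \<nu> j = Aop \<nu> (VV S \<nu>) j - Bop (VV S \<nu>) j"

abbreviation "W \<equiv> workload N N01 N1 \<beta> p0 p1 \<theta>"
abbreviation "hh \<equiv> hhat0 N \<beta> p0 p1 h0 h1"

lemma stoch_pol: "\<forall>i\<in>N. 0 \<le> u i \<and> u i \<le> 1 \<Longrightarrow> stoch N (pmat p0 p1 u)"
  unfolding stoch_def pmat_def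
  using p0_nonneg p1_nonneg p0_stoch p1_stoch
  by (auto simp: sum.distrib sum_distrib_left[symmetric])

lemma sact_range: "0 \<le> sact N1 S i \<and> sact N1 S i \<le> 1"
  by (simp add: sact_def)

lemma Vd_eq:
  assumes "\<forall>i\<in>N. 0 \<le> u i \<and> u i \<le> 1" "i \<in> N"
  shows "Vd u \<nu> i = vpol N \<beta> p0 p1 h0 h1 u i + \<nu> * bpol N \<beta> p0 p1 \<theta> u i"
  using dval_lin[OF finN stoch_pol[OF assms(1)] _ beta(2) assms(2), of 1 "hcost h0 h1 u" \<nu> "\<lambda>i. \<theta> i * u i"] beta
  by (simp add: Vd_def vpol_def bpol_def)

lemma VV_Vd: "i \<in> N \<Longrightarrow> VV S \<nu> i = Vd (sact N1 S) \<nu> i"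
  using Vd_eq[of "sact N1 S"] sact_range by (simp add: VV_def)

lemma bellman_form:
  "hcost h0 h1 u i + \<nu> * (\<theta> i * u i) + \<beta> * stepop N (pmat p0 p1 u) g i
   = u i * Aop \<nu> g i + (1 - u i) * Bop g i"
proof -
  have "stepop N (pmat p0 p1 u) g i = u i * (\<Sum>j\<in>N. p1 i j * g j) + (1 - u i) * (\<Sum>j\<in>N. p0 i j * g j)"
    by (simp add: stepop_def pmat_def sum_distrib_left sum.distrib[symmetric] algebra_simps)
  then show ?thesis unfolding hcost_def Aop_def Bop_def by (simp only:) (simp add: algebra_simps)
qed

lemma VV_bellman:
  assumes i: "i \<in> N"
  shows "VV S \<nu> i = sact N1 S i * Aop \<nu> (VV S \<nu>) i + (1 - sact N1 S i) * Bop (VV S \<nu>) i"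
proof -
  have st: "stoch N (pmat p0 p1 (sact N1 S))" using stoch_pol sact_range by blast
  have "VV S \<nu> i = Vd (sact N1 S) \<nu> i" using VV_Vd[OF i] .
  also have "\<dots> = hcost h0 h1 (sact N1 S) i + \<nu> * (\<theta> i * sact N1 S i)
      + \<beta> * (\<Sum>j\<in>N. pmat p0 p1 (sact N1 S) i j * Vd (sact N1 S) \<nu> j)"
    unfolding Vd_def using dval_bellman[OF finN st _ beta(2) i] beta by simp
  also have "(\<Sum>j\<in>N. pmat p0 p1 (sact N1 S) i j * Vd (sact N1 S) \<nu> j)
      = stepop N (pmat p0 p1 (sact N1 S)) (VV S \<nu>) i"
    unfolding stepop_def by (intro sum.cong refl) (simp add: VV_Vd)
  finally show ?thesis using bellman_form by simp
qed

lemma opt_crit: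
  assumes D: "\<forall>j\<in>N01. (j \<in> S \<longrightarrow> DD S \<nu> j \<le> 0) \<and> (j \<notin> S \<longrightarrow> 0 \<le> DD S \<nu> j)"
    and u: "\<forall>i\<in>N. 0 \<le> u i \<and> u i \<le> 1 \<and> (i \<in> N1 \<longrightarrow> u i = 1)" and i: "i \<in> N"
  shows "VV S \<nu> i \<le> Vd u \<nu> i"
  unfolding Vd_def
proof (rule dval_ge[OF finN stoch_pol _ beta(2) _ i])
  show "\<forall>i\<in>N. 0 \<le> u i \<and> u i \<le> 1" using u by blast
  show "0 \<le> \<beta>" using beta by simp
  show "\<forall>i\<in>N. VV S \<nu> i \<le> hcost h0 h1 u i + \<nu> * (\<theta> i * u i) + \<beta> * stepop N (pmat p0 p1 u) (VV S \<nu>) i"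
  proof
    fix i assume i: "i \<in> N"
    let ?A = "Aop \<nu> (VV S \<nu>) i" and ?B = "Bop (VV S \<nu>) i"
    have e: "hcost h0 h1 u i + \<nu> * (\<theta> i * u i) + \<beta> * stepop N (pmat p0 p1 u) (VV S \<nu>) i
       = u i * ?A + (1 - u i) * ?B" by (rule bellman_form)
    have vb: "VV S \<nu> i = sact N1 S i * ?A + (1 - sact N1 S i) * ?B" by (rule VV_bellman[OF i])
    have ui: "0 \<le> u i" "u i \<le> 1" using u i by auto
    show "VV S \<nu> i \<le> hcost h0 h1 u i + \<nu> * (\<theta> i * u i) + \<beta> * stepop N (pmat p0 p1 u) (VV S \<nu>) i"
      unfolding e vb
    proof (cases "i \<in> N1")
      case True
      then show "sact N1 S i * ?A + (1 - sact N1 S i) * ?B \<le> u i * ?A + (1 - u i) * ?B"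
        using u i by (simp add: sact_def)
    next
      case False
      then have i01: "i \<in> N01" using i partN by auto
      show "sact N1 S i * ?A + (1 - sact N1 S i) * ?B \<le> u i * ?A + (1 - u i) * ?B"
      proof (cases "i \<in> S")
        case True
        then have "?A - ?B \<le> 0" using D i01 by (simp add: DD_def)
        then have "0 \<le> (1 - u i) * (?B - ?A)" using ui by (intro mult_nonneg_nonneg) auto
        then show ?thesis using True by (simp add: sact_def algebra_simps)
      next
        case f2: False
        then have "0 \<le> ?A - ?B" using D i01 by (simp add: DD_def)
        then have "0 \<le> u i * (?A - ?B)" using ui by (intro mult_nonneg_nonneg) auto
        then show ?thesis using f2 False by (simp add: sact_def algebra_simps)
      qed
    qed
  qed
qed

lemma eq_lemma:
  assumes D: "DD S \<nu> p = 0" and p: "p \<notin> N1" and i: "i \<in> N"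
  shows "VV (S - {p}) \<nu> i = VV S \<nu> i"
proof -
  let ?u = "sact N1 (S - {p})" and ?g = "VV S \<nu>"
  have st: "stoch N (pmat p0 p1 ?u)" using stoch_pol sact_range by blast
  have key: "\<forall>i\<in>N. ?g i = hcost h0 h1 ?u i + \<nu> * (\<theta> i * ?u i) + \<beta> * stepop N (pmat p0 p1 ?u) ?g i"
  proof
    fix i assume i: "i \<in> N"
    show "?g i = hcost h0 h1 ?u i + \<nu> * (\<theta> i * ?u i) + \<beta> * stepop N (pmat p0 p1 ?u) ?g i"
      unfolding bellman_form VV_bellman[OF i]
    proof (cases "i = p")
      case True
      then have "Aop \<nu> ?g i = Bop ?g i" using D by (simp add: DD_def)
      then show "sact N1 S i * Aop \<nu> ?g i + (1 - sact N1 S i) * Bop ?g i =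
          ?u i * Aop \<nu> ?g i + (1 - ?u i) * Bop ?g i" by (simp add: algebra_simps)
    next
      case False
      then show "sact N1 S i * Aop \<nu> ?g i + (1 - sact N1 S i) * Bop ?g i =
          ?u i * Aop \<nu> ?g i + (1 - ?u i) * Bop ?g i" by (simp add: sact_def)
    qed
  qed
  have "?g i \<le> Vd ?u \<nu> i" unfolding Vd_def
    by (rule dval_ge[OF finN st _ beta(2) _ i]) (use beta key in auto)
  moreover have "?g i \<ge> Vd ?u \<nu> i" unfolding Vd_def
    by (rule dval_le[OF finN st _ beta(2) _ i]) (use beta key in auto)
  ultimately show ?thesis using VV_Vd[OF i] by simp
qed

lemma DD_cong: "\<forall>i\<in>N. VV S \<nu> i = VV S' \<nu> i \<Longrightarrow> DD S \<nu> j = DD S' \<nu> j"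
  by (simp add: DD_def Aop_def Bop_def)

lemma DD_affine:
  assumes "j \<in> N01"
  shows "DD S \<nu> j = DD S 0 j + \<nu> * W S j"
  using assms by (simp add: DD_def Aop_def Bop_def VV_def workload_def sum.distrib
      sum_subtractf distrib_left sum_distrib_left algebra_simps)

lemma DD_base:
  assumes j: "j \<in> N01"
  shows "DD N01 0 j = - hh j"
proof -
  let ?x = "dval N \<beta> p1 h1"
  have jN: "j \<in> N" using j partN by auto
  have st1: "stoch N p1" using p1_nonneg p1_stoch by (simp add: stoch_def)
  have vx: "VV N01 0 k = ?x k" if k: "k \<in> N" for k
  proof -
    have "VV N01 0 k = vpol N \<beta> p0 p1 h0 h1 (sact N1 N01) k" by (simp add: VV_def)
    also have "\<dots> = ?x k" unfolding vpol_def
      by (rule dval_cong) (use k partN in \<open>auto simp: pmat_def hcost_def sact_def\<close>)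
    finally show ?thesis .
  qed
  have bx: "?x j = h1 j + \<beta> * (\<Sum>k\<in>N. p1 j k * ?x k)"
    by (rule dval_bellman[OF finN st1 _ beta(2) jN]) (use beta in simp)
  have "DD N01 0 j = h1 j - h0 j + \<beta> * (\<Sum>k\<in>N. p1 j k * ?x k) - \<beta> * (\<Sum>k\<in>N. p0 j k * ?x k)"
    by (simp add: DD_def Aop_def Bop_def vx)
  then show ?thesis using bx by (simp add: hhat0_def Let_def)
qed

end
context rb begin

abbreviation "n \<equiv> card N01"
abbreviation "SS k \<equiv> ag_set N01 \<pi> k"

lemma finN01: "finite N01" using finN partN finite_subset by blast

lemma AG: "adaptive_greedy N01 F W hh \<pi> y" using PCL by (simp add: pcl_indexable_def)

lemma Wpos: "S \<in> F \<Longrightarrow> j \<in> N01 \<Longrightarrow> W S j > 0" using PCL by (simp add: pcl_indexable_def)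

lemma mono_nu: "k \<in> {1..<n} \<Longrightarrow> ag_nu y k \<le> ag_nu y (Suc k)"
  using PCL by (simp add: pcl_indexable_def)

lemma ag_nu_Suc: "ag_nu y (Suc k) = ag_nu y k + y (Suc k)"
  by (simp add: ag_nu_def)

lemma y_nonneg: "2 \<le> l \<Longrightarrow> l \<le> n \<Longrightarrow> 0 \<le> y l"
  using mono_nu[of "l - 1"] ag_nu_Suc[of "l - 1"] by (cases l) auto

lemma pi_bdry: "k \<in> {1..n} \<Longrightarrow> \<pi> k \<in> bdry F (SS k)"
  using AG by (simp add: adaptive_greedy_def)

lemma y_ratio: "k \<in> {1..n} \<Longrightarrow> y k = ag_ratio N01 W hh \<pi> y k (\<pi> k)"
  using AG by (simp add: adaptive_greedy_def)

lemma pi_in: "k \<in> {1..n} \<Longrightarrow> \<pi> k \<in> N01 \<and> \<pi> k \<notin> \<pi> ` {1..<k}"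
  using pi_bdry[of k] by (auto simp: bdry_def ag_set_def)

lemma SS_Suc: "1 \<le> k \<Longrightarrow> SS (Suc k) = SS k - {\<pi> k}"
proof -
  assume "1 \<le> k"
  then have "{1..<Suc k} = insert k {1..<k}" by auto
  then show ?thesis by (auto simp: ag_set_def)
qed

lemma inj_pi: "inj_on \<pi> {1..n}"
proof (rule inj_onI)
  fix a b assume ab: "a \<in> {1..n}" "b \<in> {1..n}" "\<pi> a = \<pi> b"
  show "a = b"
  proof (rule ccontr)
    assume "a \<noteq> b"
    then consider "a < b" | "b < a" by linarith
    then show False
    proof cases
      case 1
      then have "\<pi> b \<in> \<pi> ` {1..<b}" using ab by (metis atLeastAtMost_iff atLeastLessThan_iff image_eqI)
      then show False using pi_in[of b] ab by blast
    next
      case 2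
      then have "\<pi> a \<in> \<pi> ` {1..<a}" using ab by (metis atLeastAtMost_iff atLeastLessThan_iff image_eqI)
      then show False using pi_in[of a] ab by blast
    qed
  qed
qed

lemma pi_image: "\<pi> ` {1..n} = N01"
proof (rule card_subset_eq[OF finN01])
  show "\<pi> ` {1..n} \<subseteq> N01" using pi_in by auto
  show "card (\<pi> ` {1..n}) = n" using card_image[OF inj_pi] by simp
qed

lemma SS_eq: "k \<in> {1..n+1} \<Longrightarrow> SS k = \<pi> ` {k..n}"
proof -
  assume k: "k \<in> {1..n+1}"
  have "SS k = \<pi> ` {1..n} - \<pi> ` {1..<k}" unfolding ag_set_def pi_image ..
  also have "\<dots> = \<pi> ` ({1..n} - {1..<k})"
    by (rule inj_on_image_set_diff[OF inj_pi, symmetric]) (use k in auto)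
  also have "{1..n} - {1..<k} = {k..n}" using k by auto
  finally show ?thesis .
qed

lemma N01_in_F: "N01 \<in> F"
proof -
  have FP: "F \<subseteq> Pow N01" and e: "{} \<in> F"
    and ext: "\<forall>S\<in>F. S \<noteq> N01 \<longrightarrow> (\<exists>j\<in>N01 - S. insert j S \<in> F)"
    using F by (auto simp: set_system_def)
  have fF: "finite F" using FP finN01 by (meson finite_Pow_iff rev_finite_subset)
  define m where "m = Max (card ` F)"
  have "m \<in> card ` F" unfolding m_def using fF e by (intro Max_in) auto
  then obtain S where S: "S \<in> F" "card S = m" by auto
  have mx: "card T \<le> m" if "T \<in> F" for T unfolding m_def using fF that by (intro Max_ge) auto
  show ?thesis
  proof (rule ccontr)
    assume "N01 \<notin> F"
    then have "S \<noteq> N01" using S by auto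
    then obtain j where j: "j \<in> N01 - S" "insert j S \<in> F" using ext S by blast
    have "finite S" using S FP finN01 by (meson PowD in_mono rev_finite_subset)
    then have "card (insert j S) = Suc m" using j S by simp
    then show False using mx[OF j(2)] by simp
  qed
qed

lemma SS_in_F: "k \<in> {1..n+1} \<Longrightarrow> SS k \<in> F"
proof (induction k)
  case 0 then show ?case by simp
next
  case (Suc k)
  show ?case
  proof (cases "k = 0")
    case True then show ?thesis using N01_in_F by (simp add: ag_set_def)
  next
    case False
    then have k: "k \<in> {1..n}" using Suc by auto
    then have "SS k - {\<pi> k} \<in> F" using pi_bdry[OF k] by (simp add: bdry_def)
    then show ?thesis using SS_Suc[of k] k by simp
  qed
qed

lemma WSpos: "k \<in> {1..n+1} \<Longrightarrow> j \<in> N01 \<Longrightarrow> W (SS k) j > 0"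
  using Wpos SS_in_F by blast

lemma ratio_sum: "m \<in> {1..n} \<Longrightarrow> (\<Sum>l\<in>{1..<Suc m}. y l * W (SS l) (\<pi> m)) = hh (\<pi> m)"
proof -
  assume m: "m \<in> {1..n}"
  have pos: "W (SS m) (\<pi> m) > 0" using WSpos[of m "\<pi> m"] m pi_in[OF m] by auto
  have "y m * W (SS m) (\<pi> m) = hh (\<pi> m) - (\<Sum>l\<in>{1..<m}. y l * W (SS l) (\<pi> m))"
    using y_ratio[OF m] pos by (simp add: ag_ratio_def)
  moreover have "(\<Sum>l\<in>{1..<Suc m}. y l * W (SS l) (\<pi> m)) = (\<Sum>l\<in>{1..<m}. y l * W (SS l) (\<pi> m)) + y m * W (SS m) (\<pi> m)"
    using m by (intro sum.atLeastLessThan_Suc) auto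
  ultimately show ?thesis by simp
qed

lemma DD_formula:
  "k \<in> {1..n+1} \<Longrightarrow> \<forall>j\<in>N01. \<forall>\<nu>. DD (SS k) \<nu> j
     = (\<Sum>l\<in>{1..<k}. y l * W (SS l) j) + (\<nu> - ag_nu y (k - 1)) * W (SS k) j - hh j"
proof (induction k)
  case 0 then show ?case by simp
next
  case (Suc k)
  show ?case
  proof (cases "k = 0")
    case True
    show ?thesis
    proof (intro ballI allI)
      fix j \<nu> assume j: "j \<in> N01"
      have "SS (Suc k) = N01" using True by (simp add: ag_set_def)
      then show "DD (SS (Suc k)) \<nu> j = (\<Sum>l\<in>{1..<Suc k}. y l * W (SS l) j) + (\<nu> - ag_nu y (Suc k - 1)) * W (SS (Suc k)) j - hh j"
        using DD_affine[OF j, of N01 \<nu>] DD_base[OF j] True by (simp add: ag_nu_def)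
    qed
  next
    case False
    then have k: "k \<in> {1..n}" using Suc by auto
    have IH: "\<forall>j\<in>N01. \<forall>\<nu>. DD (SS k) \<nu> j
       = (\<Sum>l\<in>{1..<k}. y l * W (SS l) j) + (\<nu> - ag_nu y (k - 1)) * W (SS k) j - hh j"
      using Suc k by auto
    have nuk: "ag_nu y k = ag_nu y (k - 1) + y k" using ag_nu_Suc[of "k - 1"] k by simp
    let ?nk = "ag_nu y k"
    have pk: "\<pi> k \<in> N01" using pi_in[OF k] by simp
    have sk: "(\<Sum>l\<in>{1..<Suc k}. y l * W (SS l) j) = (\<Sum>l\<in>{1..<k}. y l * W (SS l) j) + y k * W (SS k) j" for j
      using k by (intro sum.atLeastLessThan_Suc) auto
    have "DD (SS k) ?nk (\<pi> k) = 0"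
      using IH[rule_format, OF pk, of ?nk] ratio_sum[OF k] sk[of "\<pi> k"] nuk by simp
    then have eqV: "\<forall>i\<in>N. VV (SS (Suc k)) ?nk i = VV (SS k) ?nk i"
      using eq_lemma[of "SS k" ?nk "\<pi> k"] SS_Suc[of k] k pk partN by auto
    show ?thesis
    proof (intro ballI allI)
      fix j \<nu> assume j: "j \<in> N01"
      have "DD (SS (Suc k)) \<nu> j = DD (SS (Suc k)) ?nk j + (\<nu> - ?nk) * W (SS (Suc k)) j"
        using DD_affine[OF j, of "SS (Suc k)" \<nu>] DD_affine[OF j, of "SS (Suc k)" ?nk]
        by (simp add: algebra_simps)
      also have "DD (SS (Suc k)) ?nk j = DD (SS k) ?nk j" using DD_cong[OF eqV] .
      finally show "DD (SS (Suc k)) \<nu> j = (\<Sum>l\<in>{1..<Suc k}. y l * W (SS l) j) + (\<nu> - ag_nu y (Suc k - 1)) * W (SS (Suc k)) j - hh j"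
        using IH[rule_format, OF j, of ?nk] sk[of j] nuk by (simp add: algebra_simps)
    qed
  qed
qed


definition cond where
  "cond k \<nu> \<longleftrightarrow> k \<in> {1..n+1} \<and> (2 \<le> k \<longrightarrow> ag_nu y (k - 1) \<le> \<nu>) \<and> (k \<le> n \<longrightarrow> \<nu> \<le> ag_nu y k)"

lemma DD_sign:
  assumes c: "cond k \<nu>" and j: "j \<in> N01"
  shows "(j \<in> SS k \<longrightarrow> DD (SS k) \<nu> j \<le> 0) \<and> (j \<notin> SS k \<longrightarrow> 0 \<le> DD (SS k) \<nu> j)"
proof -
  have k: "k \<in> {1..n+1}" and lo: "2 \<le> k \<Longrightarrow> ag_nu y (k - 1) \<le> \<nu>" and hi: "k \<le> n \<Longrightarrow> \<nu> \<le> ag_nu y k"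
    using c by (auto simp: cond_def)
  obtain m where m: "m \<in> {1..n}" "j = \<pi> m" using j pi_image by blast
  have mem: "j \<in> SS k \<longleftrightarrow> \<not> m < k"
  proof -
    have "j \<in> \<pi> ` {1..<k} \<longleftrightarrow> m \<in> {1..<k}"
      unfolding m(2) by (rule inj_on_image_mem_iff[OF inj_pi m(1)]) (use k in auto)
    then show ?thesis using j m by (auto simp: ag_set_def)
  qed
  have Fk: "DD (SS k) \<nu> j = (\<Sum>l\<in>{1..<k}. y l * W (SS l) j) + (\<nu> - ag_nu y (k - 1)) * W (SS k) j - hh j"
    using DD_formula[OF k] j by blast
  have R: "(\<Sum>l\<in>{1..<Suc m}. y l * W (SS l) j) = hh j" using ratio_sum[OF m(1)] m(2) by simp
  have term_nonneg: "0 \<le> y l * W (SS l) j" if "2 \<le> l" "l \<le> n" for l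
    using y_nonneg[OF that] WSpos[of l j] j that by (intro mult_nonneg_nonneg) auto
  have Wk: "0 < W (SS k) j" using WSpos[OF k j] .
  show ?thesis
  proof (cases "m < k")
    case False
    then have km: "k \<le> m" by simp
    have split1: "(\<Sum>l\<in>{1..<Suc m}. y l * W (SS l) j) = (\<Sum>l\<in>{1..<k}. y l * W (SS l) j) + (\<Sum>l\<in>{k..<Suc m}. y l * W (SS l) j)"
      using k km by (intro sum.atLeastLessThan_concat[symmetric]) auto
    have split2: "(\<Sum>l\<in>{k..<Suc m}. y l * W (SS l) j) = y k * W (SS k) j + (\<Sum>l\<in>{Suc k..<Suc m}. y l * W (SS l) j)"
      using km by (intro sum.atLeast_Suc_lessThan) auto
    have T: "0 \<le> (\<Sum>l\<in>{Suc k..<Suc m}. y l * W (SS l) j)"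
      using k m by (intro sum_nonneg term_nonneg) auto
    have nuk: "ag_nu y k = ag_nu y (k - 1) + y k" using ag_nu_Suc[of "k - 1"] k by simp
    have "\<nu> \<le> ag_nu y k" using hi km m by auto
    then have "(\<nu> - ag_nu y k) * W (SS k) j \<le> 0" using Wk by (intro mult_nonpos_nonneg) auto
    then have "DD (SS k) \<nu> j \<le> 0"
      using Fk R split1 split2 T nuk by (simp add: algebra_simps)
    then show ?thesis using mem False by simp
  next
    case True
    have split1: "(\<Sum>l\<in>{1..<k}. y l * W (SS l) j) = (\<Sum>l\<in>{1..<Suc m}. y l * W (SS l) j) + (\<Sum>l\<in>{Suc m..<k}. y l * W (SS l) j)"
      using True m by (intro sum.atLeastLessThan_concat[symmetric]) auto
    have T: "0 \<le> (\<Sum>l\<in>{Suc m..<k}. y l * W (SS l) j)"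
      using k m by (intro sum_nonneg term_nonneg) auto
    have "ag_nu y (k - 1) \<le> \<nu>" using lo True m by auto
    then have "0 \<le> (\<nu> - ag_nu y (k - 1)) * W (SS k) j" using Wk by (intro mult_nonneg_nonneg) auto
    then have "0 \<le> DD (SS k) \<nu> j" using Fk R split1 T by (simp add: algebra_simps)
    then show ?thesis using mem True by simp
  qed
qed

lemma VV_opt:
  assumes "cond k \<nu>" "\<forall>i\<in>N. 0 \<le> u i \<and> u i \<le> 1 \<and> (i \<in> N1 \<longrightarrow> u i = 1)" "i \<in> N"
  shows "VV (SS k) \<nu> i \<le> Vd u \<nu> i"
  by (rule opt_crit[OF _ assms(2,3)]) (use DD_sign[OF assms(1)] in blast)

lemma VV_le:
  assumes "cond k \<nu>" "i \<in> N"
  shows "VV (SS k) \<nu> i \<le> VV S \<nu> i"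
  using VV_opt[OF assms(1) _ assms(2), of "sact N1 S"] VV_Vd[OF assms(2)]
  by (simp add: sact_def)

lemma v_eq:
  assumes "cond k \<nu>" "i \<in> N"
  shows "vopt N N1 \<beta> p0 p1 h0 h1 \<theta> i \<nu> = VV (SS k) \<nu> i"
  unfolding vopt_def
proof (rule cInf_eq_minimum)
  show "VV (SS k) \<nu> i \<in> (\<lambda>u. vpol N \<beta> p0 p1 h0 h1 u i + \<nu> * bpol N \<beta> p0 p1 \<theta> u i) ` policies N N1"
    by (rule image_eqI[of _ _ "sact N1 (SS k)"]) (auto simp: VV_def policies_def sact_def)
  fix x assume "x \<in> (\<lambda>u. vpol N \<beta> p0 p1 h0 h1 u i + \<nu> * bpol N \<beta> p0 p1 \<theta> u i) ` policies N N1"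
  then obtain u where u: "u \<in> policies N N1" "x = vpol N \<beta> p0 p1 h0 h1 u i + \<nu> * bpol N \<beta> p0 p1 \<theta> u i"
    by blast
  have u': "\<forall>i\<in>N. 0 \<le> u i \<and> u i \<le> 1 \<and> (i \<in> N1 \<longrightarrow> u i = 1)" using u(1) by (simp add: policies_def)
  have "x = Vd u \<nu> i" using Vd_eq[of u i \<nu>] u' u(2) assms(2) by auto
  then show "VV (SS k) \<nu> i \<le> x" using VV_opt[OF assms(1) u' assms(2)] by simp
qed

lemma cond_exists: "\<exists>k. cond k \<nu>"
proof -
  define K where "K = {k\<in>{1..n+1}. k = 1 \<or> ag_nu y (k - 1) \<le> \<nu>}"
  have fK: "finite K" and K1: "1 \<in> K" by (auto simp: K_def)
  define k where "k = Max K"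
  have kK: "k \<in> K" unfolding k_def using fK K1 by (intro Max_in) auto
  have mx: "k' \<in> K \<Longrightarrow> k' \<le> k" for k' unfolding k_def using fK by (intro Max_ge) auto
  have "cond k \<nu>"
    unfolding cond_def
  proof (intro conjI impI)
    show "k \<in> {1..n+1}" using kK by (simp add: K_def)
    show "ag_nu y (k - 1) \<le> \<nu>" if "2 \<le> k" using kK that by (auto simp: K_def)
    show "\<nu> \<le> ag_nu y k" if "k \<le> n"
    proof (rule ccontr)
      assume "\<not> \<nu> \<le> ag_nu y k"
      then have "Suc k \<in> K" using that kK by (auto simp: K_def)
      then show False using mx[of "Suc k"] by simp
    qed
  qed
  then show ?thesis by blast
qed

end

theorem corollary4:
  fixes N N01 N1 :: "'a set" and F :: "'a set set" and \<beta> :: real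
    and p0 p1 :: "'a \<Rightarrow> 'a \<Rightarrow> real" and h0 h1 \<theta> :: "'a \<Rightarrow> real"
    and \<pi> :: "nat \<Rightarrow> 'a" and y :: "nat \<Rightarrow> real"
  assumes finN: "finite N"
    and partN: "N = N01 \<union> N1" "N01 \<inter> N1 = {}"
    and beta: "0 < \<beta>" "\<beta> < 1"
    and p0_nonneg: "\<forall>i\<in>N. \<forall>j\<in>N. 0 \<le> p0 i j"
    and p1_nonneg: "\<forall>i\<in>N. \<forall>j\<in>N. 0 \<le> p1 i j"
    and p0_stoch: "\<forall>i\<in>N. (\<Sum>j\<in>N. p0 i j) = 1"
    and p1_stoch: "\<forall>i\<in>N. (\<Sum>j\<in>N. p1 i j) = 1"
    and uncontr: "\<forall>i\<in>N1. \<forall>j\<in>N. p1 i j = p0 i j"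
    and theta_pos: "\<forall>j\<in>N. \<theta> j > 0"
    and F: "set_system N01 F"
    and PCL: "pcl_indexable N N01 N1 F \<beta> p0 p1 h0 h1 \<theta> \<pi> y"
  defines "vS \<equiv> (\<lambda>k i \<nu>. vpol N \<beta> p0 p1 h0 h1 (sact N1 (\<pi> ` {k..card N01})) i
                        + \<nu> * bpol N \<beta> p0 p1 \<theta> (sact N1 (\<pi> ` {k..card N01})) i)"
    and "v \<equiv> vopt N N1 \<beta> p0 p1 h0 h1 \<theta>"
    and "\<nu>\<pi> \<equiv> ag_nu y"
  shows "\<forall>i\<in>N.
           continuous_on UNIV (v i) \<and> concave_on UNIV (v i) \<and> piecewise_linear (v i)
         \<and> (\<forall>\<nu>. v i \<nu> = Min ((\<lambda>k. vS k i \<nu>) ` {1..card N01 + 1}))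
         \<and> (\<forall>\<nu>. \<nu> \<le> \<nu>\<pi> 1 \<longrightarrow> v i \<nu> = vS 1 i \<nu>)
         \<and> (\<forall>k\<in>{2..card N01}. \<forall>\<nu>\<in>{\<nu>\<pi> (k - 1)..\<nu>\<pi> k}. v i \<nu> = vS k i \<nu>)
         \<and> (\<forall>\<nu>. \<nu>\<pi> (card N01) \<le> \<nu> \<longrightarrow> v i \<nu> = vS (card N01 + 1) i \<nu>)"
proof -
  interpret rb N N01 N1 F \<beta> p0 p1 h0 h1 \<theta> \<pi> y
    by (unfold_locales; fact)
  have vS: "vS k i \<nu> = VV (SS k) \<nu> i" if "k \<in> {1..card N01 + 1}" for k i \<nu>
    using SS_eq[OF that] by (simp add: assms(14) VV_def)
  have ve: "v i \<nu> = VV (SS k) \<nu> i" if "cond k \<nu>" "i \<in> N" for i k \<nu>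
    using v_eq[OF that] by (simp add: assms(15))
  have nu: "\<nu>\<pi> = ag_nu y" by (simp add: assms(16))
  have aff: "VV S \<nu> i = vpol N \<beta> p0 p1 h0 h1 (sact N1 S) i + \<nu> * bpol N \<beta> p0 p1 \<theta> (sact N1 S) i" for S \<nu> i
    by (simp add: VV_def)
  show ?thesis
  proof (intro ballI conjI allI impI)
    fix i assume i: "i \<in> N"
    have vle: "v i \<nu> \<le> VV (SS k') \<nu> i" for \<nu> k'
    proof -
      obtain k where k: "cond k \<nu>" using cond_exists by blast
      show ?thesis using ve[OF k i] VV_le[OF k i] by simp
    qed
    show conc: "concave_on UNIV (v i)"
      unfolding concave_on_iff
    proof (intro conjI ballI allI impI)
      show "convex (UNIV :: real set)" by simp
      fix a b :: real and s t :: real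
      assume st: "0 \<le> s" "0 \<le> t" "s + t = 1"
      obtain k where k: "cond k (s *\<^sub>R a + t *\<^sub>R b)" using cond_exists by blast
      let ?c = "vpol N \<beta> p0 p1 h0 h1 (sact N1 (SS k)) i" and ?d = "bpol N \<beta> p0 p1 \<theta> (sact N1 (SS k)) i"
      have "v i (s *\<^sub>R a + t *\<^sub>R b) = ?c + (s * a + t * b) * ?d" using ve[OF k i] aff by simp
      also have "\<dots> = s * (?c + a * ?d) + t * (?c + b * ?d)" 
      proof -
        have t: "t = 1 - s" using st(3) by simp
        show ?thesis unfolding t by (simp add: algebra_simps)
      qed
      also have "\<dots> = s * VV (SS k) a i + t * VV (SS k) b i" using aff by simp
      finally have e: "v i (s *\<^sub>R a + t *\<^sub>R b) = s * VV (SS k) a i + t * VV (SS k) b i" .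
      have "s * v i a \<le> s * VV (SS k) a i" using st vle by (intro mult_left_mono) auto
      moreover have "t * v i b \<le> t * VV (SS k) b i" using st vle by (intro mult_left_mono) auto
      ultimately show "s * v i a + t * v i b \<le> v i (s *\<^sub>R a + t *\<^sub>R b)" using e by simp
    qed
    have "continuous_on UNIV (\<lambda>x. - v i x)"
      using conc by (intro convex_on_continuous) (auto simp: concave_on_def)
    then have "continuous_on UNIV (\<lambda>x. - (- v i x))" by (rule continuous_on_minus)
    then show "continuous_on UNIV (v i)" by simp
    show "piecewise_linear (v i)"
      unfolding piecewise_linear_def
    proof (rule exI[of _ "ag_nu y ` {1..card N01}"], intro conjI allI impI)
      show "finite (ag_nu y ` {1..card N01})" by simp
      fix a b :: real assume ab: "a < b \<and> {a<..<b} \<inter> ag_nu y ` {1..card N01} = {}"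
      define m where "m = (a + b) / 2"
      have am: "a < m" "m < b" using ab by (auto simp: m_def)
      obtain k where k: "cond k m" using cond_exists by blast
      have "\<forall>x\<in>{a<..<b}. v i x = vpol N \<beta> p0 p1 h0 h1 (sact N1 (SS k)) i + bpol N \<beta> p0 p1 \<theta> (sact N1 (SS k)) i * x"
      proof
        fix x assume x: "x \<in> {a<..<b}"
        have "cond k x"
          unfolding cond_def
        proof (intro conjI impI)
          show "k \<in> {1..card N01 + 1}" using k by (simp add: cond_def)
          show "ag_nu y (k - 1) \<le> x" if "2 \<le> k"
          proof -
            have "ag_nu y (k - 1) \<le> m" using k that by (simp add: cond_def)
            moreover have "k - 1 \<in> {1..card N01}" using k that by (auto simp: cond_def)
            then have "ag_nu y (k - 1) \<notin> {a<..<b}" using ab by blast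
            ultimately show ?thesis using am x by auto
          qed
          show "x \<le> ag_nu y k" if "k \<le> card N01"
          proof -
            have "m \<le> ag_nu y k" using k that by (simp add: cond_def)
            moreover have "k \<in> {1..card N01}" using k that by (auto simp: cond_def)
            then have "ag_nu y k \<notin> {a<..<b}" using ab by blast
            ultimately show ?thesis using am x by auto
          qed
        qed
        then show "v i x = vpol N \<beta> p0 p1 h0 h1 (sact N1 (SS k)) i + bpol N \<beta> p0 p1 \<theta> (sact N1 (SS k)) i * x"
          using ve[OF _ i] aff by (simp add: mult.commute)
      qed
      then show "\<exists>c d. \<forall>x\<in>{a<..<b}. v i x = c + d * x" by blast
    qed
    fix \<nu>
    show "v i \<nu> = Min ((\<lambda>k. vS k i \<nu>) ` {1..card N01 + 1})"
    proof (rule Min_eqI[symmetric])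
      show "finite ((\<lambda>k. vS k i \<nu>) ` {1..card N01 + 1})" by simp
      show "v i \<nu> \<le> z" if "z \<in> (\<lambda>k. vS k i \<nu>) ` {1..card N01 + 1}" for z
        using that vS vle by auto
      obtain k where k: "cond k \<nu>" using cond_exists by blast
      then have "k \<in> {1..card N01 + 1}" by (simp add: cond_def)
      then show "v i \<nu> \<in> (\<lambda>k. vS k i \<nu>) ` {1..card N01 + 1}"
        using ve[OF k i] vS by auto
    qed
  next
    fix i \<nu> assume i: "i \<in> N" and h: "\<nu> \<le> \<nu>\<pi> 1"
    have "cond 1 \<nu>" using h nu by (auto simp: cond_def)
    then show "v i \<nu> = vS 1 i \<nu>" using ve[OF _ i] vS[of 1] by simp
  next
    fix i k \<nu> assume i: "i \<in> N" and k: "k \<in> {2..card N01}" and h: "\<nu> \<in> {\<nu>\<pi> (k - 1)..\<nu>\<pi> k}"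
    have "cond k \<nu>" using h k nu by (auto simp: cond_def)
    then show "v i \<nu> = vS k i \<nu>" using ve[OF _ i] vS[of k] k by simp
  next
    fix i \<nu> assume i: "i \<in> N" and h: "\<nu>\<pi> (card N01) \<le> \<nu>"
    have "cond (card N01 + 1) \<nu>" using h nu by (auto simp: cond_def)
    then show "v i \<nu> = vS (card N01 + 1) i \<nu>" using ve[OF _ i] vS[of "card N01 + 1"] by simp
  qed
qed

end
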